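(* Let $A\in\mathbb{R}^{n_x\times n_x}$, $B\in\mathbb{R}^{n_x\times n_u}$, $C\in\mathbb{R}^{n_y\times n_x}$ and $D\in\mathbb{R}^{n_y\times n_u}$. Let $0<\mu_u\le\nu_u$ and $0<\mu_y\le\nu_y$, and set $\alpha_u=\frac{\nu_u+\mu_u}{2}$, $\beta_u=\frac{\nu_u-\mu_u}{2}$, $\alpha_y=\frac{\nu_y+\mu_y}{2}$, $\beta_y=\frac{\nu_y-\mu_y}{2}$. Suppose the following two LMIs are feasible. (a) There exist a symmetric $P\succ0$, $Y\in\mathbb{R}^{n_x\times n_x}$, $X\in\mathbb{R}^{n_u\times n_x}$, $\sigma>0$ and $\rho_c\in(0,1)$ with $$\begin{bmatrix}(1-\rho_c)P-\sigma BB^\mathsf{T} & AY+\alpha_uBX & 0\\ \star & Y^\mathsf{T}+Y-P & \beta_uX^\mathsf{T}\\ \star&\star&\sigma I\end{bmatrix}\succ0.$$ Set $K=XY^{-1}$. (b) There exist a symmetric $Q\succ0$, $U\in\mathbb{R}^{n_x\times n_x}$, $V\in\mathbb{R}^{n_x\times n_y}$, $\eta>0$ and $\rho_o\in(0,1)$ with $$\begin{bmatrix}(1-\rho_o)Q-\eta C^\mathsf{T}C & (UA+\alpha_yVC)^\mathsf{T} & 0\\ \star & U+U^\mathsf{T}-Q & \beta_yV\\ \star&\star&\eta I\end{bmatrix}\succ0.$$ Set $L=U^{-1}V$. Let $\mathcal{S}_u:\mathbb{R}^{n_u}\to\mathbb{R}^{n_u}$ be continuously differentiable with $\mathcal{S}_u(0)=0$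 and $\|\mathcal{J}^u(v)-\alpha_uI\|\le\beta_u$ for all $v$. Let $\mathcal{S}_y:\mathbb{R}^{n_y}\to\mathbb{R}^{n_y}$ be continuously differentiable with $\|\mathcal{J}^y(z)-\alpha_yI\|\le\beta_y$ for all $z$. Consider the closed-loop system $$x_{k+1}=Ax_k+B\mathcal{S}_u(u_k),\quad \hat x_{k+1}=A\hat x_k+B\mathcal{S}_u(u_k)+L(\hat y_k-y_k),$$ $$y_k=\mathcal{S}_y(Cx_k+D\mathcal{S}_u(u_k)),\quad \hat y_k=\mathcal{S}_y(C\hat x_k+D\mathcal{S}_u(u_k)),\quad u_k=K\hat x_k.$$ Then this closed-loop system is globally exponentially stable. That is, there exist constants $c>0$ and $\lambda\in(0,1)$ such that for all initial conditions $x_0,\hat x_0$ and all $k\ge0$, $$\|x_k\|+\|\hat x_k-x_k\|\le c\,\lambda^k\big(\|x_0\|+\|\hat x_0-x_0\|\big).$$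
   Context: $\|\cdot\|$ denotes the Euclidean norm and the induced spectral matrix norm. $M\succ0$ means $M$ is symmetric positive definite, and $\star$ denotes the blocks determined by symmetry. $\mathcal{J}^u$ and $\mathcal{J}^y$ denote the Jacobians of $\mathcal{S}_u$ and $\mathcal{S}_y$. The Jacobian conditions are the uncertainty-set description the paper uses for bi-Lipschitz scaffolding nonlinearities; in the scalar case they are equivalent to the derivative lying in $[\mu,\nu]$. *)

theory Defs
  imports "HOL-Analysis.Analysis"
begin

text \<open>Symmetric positive definite matrix: M = M^T and v^T M v > 0 for all v \<noteq> 0.\<close>
definition pos_def :: "real^'n^'n \<Rightarrow> bool" where
  "pos_def M \<longleftrightarrow> transpose M = M \<and> (\<forall>v. v \<noteq> 0 \<longrightarrow> v \<bullet> (M *v v) > 0)"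

text \<open>Symmetric 3x3 block matrix
  [M11 M12 M13; M12^T M22 M23; M13^T M23^T M33], indexed by 'a + ('b + 'c).\<close>
definition blk3 ::
  "real^'a^'a \<Rightarrow> real^'b^'a \<Rightarrow> real^'c^'a \<Rightarrow> real^'b^'b \<Rightarrow> real^'c^'b \<Rightarrow> real^'c^'c
   \<Rightarrow> real^('a + ('b + 'c))^('a + ('b + 'c))" where
  "blk3 M11 M12 M13 M22 M23 M33 = (\<chi> i j.
     (case i of
        Inl a \<Rightarrow> (case j of Inl a' \<Rightarrow> M11 $ a $ a'
                          | Inr (Inl b') \<Rightarrow> M12 $ a $ b'
                          | Inr (Inr c') \<Rightarrow> M13 $ a $ c')
      | Inr (Inl b) \<Rightarrow> (case j of Inl a' \<Rightarrow> M12 $ a' $ b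
                          | Inr (Inl b') \<Rightarrow> M22 $ b $ b'
                          | Inr (Inr c') \<Rightarrow> M23 $ b $ c')
      | Inr (Inr c) \<Rightarrow> (case j of Inl a' \<Rightarrow> M13 $ a' $ c
                          | Inr (Inl b') \<Rightarrow> M23 $ b' $ c
                          | Inr (Inr c') \<Rightarrow> M33 $ c $ c')))"

text \<open>Spectral (operator) norm of a matrix.\<close>
definition spec_norm :: "real^'n^'m \<Rightarrow> real" where
  "spec_norm M = onorm (\<lambda>v. M *v v)"

end

theory Submission
  imports Defs
begin


lemma sum_UNIV_Plus: "sum f (UNIV :: ('a::finite + 'b::finite) set) = sum (\<lambda>a. f (Inl a)) UNIV + sum (\<lambda>b. f (Inr b)) UNIV"
  using sum.Plus[of "UNIV::'a set" "UNIV::'b set" f] by (simp add: o_def)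

lemma psd_of_pos_def: "pos_def M \<Longrightarrow> 0 \<le> v \<bullet> (M *v v)"
  unfolding pos_def_def by (cases "v = 0") (auto intro: less_imp_le)

lemma inner_vmul: "(x::real^'n) \<bullet> (y v* M) = y \<bullet> (M *v x)"
  by (metis dot_lmul_matrix inner_commute)

lemma blk_form:
  fixes p :: "real^'a" and q :: "real^'b" and z :: "real^'c"
  assumes "pos_def (blk3 M11 M12 M13 M22 M23 M33)"
  shows "0 \<le> p \<bullet> (M11 *v p) + 2 * (p \<bullet> (M12 *v q)) + 2 * (p \<bullet> (M13 *v z)) + q \<bullet> (M22 *v q)
            + 2 * (q \<bullet> (M23 *v z)) + z \<bullet> (M33 *v z)"
proof -
  define v :: "real^('a + ('b + 'c))" where "v = (\<chi> i. case i of Inl a \<Rightarrow> p$a | Inr (Inl b) \<Rightarrow> q$b | Inr (Inr c) \<Rightarrow> z$c)"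
  have "0 \<le> v \<bullet> (blk3 M11 M12 M13 M22 M23 M33 *v v)" by (rule psd_of_pos_def[OF assms])
  also have "\<dots> = p \<bullet> (M11 *v p + M12 *v q + M13 *v z) + q \<bullet> (transpose M12 *v p + M22 *v q + M23 *v z)
     + z \<bullet> (transpose M13 *v p + transpose M23 *v q + M33 *v z)"
    by (simp add: v_def blk3_def inner_vec_def matrix_vector_mult_def sum_UNIV_Plus transpose_def
        vector_add_component sum.distrib algebra_simps)
  also have "\<dots> = p \<bullet> (M11 *v p) + 2 * (p \<bullet> (M12 *v q)) + 2 * (p \<bullet> (M13 *v z)) + q \<bullet> (M22 *v q)
            + 2 * (q \<bullet> (M23 *v z)) + z \<bullet> (M33 *v z)"
    by (simp add: inner_add_right inner_vmul)
  finally show ?thesis .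
qed

lemma mv_minus: "(A::real^'n^'m) *v (- x) = - (A *v x)"
  by (simp add: matrix_vector_mult_def vec_eq_iff sum_negf)

lemma obs_step:
  fixes A U Q :: "real^'n^'n" and C :: "real^'n^'m" and V :: "real^'m^'n"
    and e ep :: "real^'n" and z :: "real^'m"
  assumes pd: "pos_def (blk3 ((1 - \<rho>) *\<^sub>R Q - \<eta> *\<^sub>R (transpose C ** C))
                     (transpose (U ** A + \<alpha> *\<^sub>R (V ** C)))
                     (0 :: real^'m^'n)
                     (U + transpose U - Q)
                     (\<beta> *\<^sub>R V)
                     (\<eta> *\<^sub>R mat 1))"
    and eta: "\<eta> > 0" and nz: "norm z \<le> norm (C *v e)"
    and hU: "U *v ep = (U ** A + \<alpha> *\<^sub>R (V ** C)) *v e + \<beta> *\<^sub>R (V *v z)"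
  shows "ep \<bullet> (Q *v ep) \<le> (1 - \<rho>) * (e \<bullet> (Q *v e))"
proof -
  define N where "N = U ** A + \<alpha> *\<^sub>R (V ** C)"
  have F: "0 \<le> e \<bullet> (((1 - \<rho>) *\<^sub>R Q - \<eta> *\<^sub>R (transpose C ** C)) *v e) + 2 * (e \<bullet> (transpose N *v (-ep)))
     + 2 * (e \<bullet> ((0 :: real^'m^'n) *v z)) + (-ep) \<bullet> ((U + transpose U - Q) *v (-ep))
     + 2 * ((-ep) \<bullet> ((\<beta> *\<^sub>R V) *v z)) + z \<bullet> ((\<eta> *\<^sub>R mat 1) *v z)"
    using blk_form[OF pd[folded N_def], of e "-ep" z] .
  have t1: "e \<bullet> (((1 - \<rho>) *\<^sub>R Q - \<eta> *\<^sub>R (transpose C ** C)) *v e) = (1 - \<rho>) * (e \<bullet> (Q *v e)) - \<eta> * (norm (C *v e))^2"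
    by (simp add: matrix_vector_mult_diff_rdistrib scaleR_matrix_vector_assoc[symmetric] inner_diff_right
        matrix_vector_mul_assoc[symmetric] inner_vmul power2_norm_eq_inner inner_vmul)
  have t2: "e \<bullet> (transpose N *v (-ep)) = - (ep \<bullet> (N *v e))"
    by (simp add: inner_vmul inner_commute mv_minus)
  have t4: "(-ep) \<bullet> ((U + transpose U - Q) *v (-ep)) = 2 * (ep \<bullet> (U *v ep)) - ep \<bullet> (Q *v ep)"
    by (simp add: matrix_vector_mult_diff_rdistrib matrix_vector_mult_add_rdistrib inner_diff_right inner_add_right
       inner_vmul inner_commute mv_minus)
  have t5: "(-ep) \<bullet> ((\<beta> *\<^sub>R V) *v z) = - \<beta> * (ep \<bullet> (V *v z))"
    by (simp add: scaleR_matrix_vector_assoc[symmetric])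
  have t6: "z \<bullet> ((\<eta> *\<^sub>R mat 1) *v z) = \<eta> * (norm z)^2"
    by (simp add: scaleR_matrix_vector_assoc[symmetric] power2_norm_eq_inner)
  have hU': "ep \<bullet> (U *v ep) = ep \<bullet> (N *v e) + \<beta> * (ep \<bullet> (V *v z))"
    using hU by (simp add: N_def inner_add_right)
  have "\<eta> * (norm z)^2 \<le> \<eta> * (norm (C *v e))^2"
    using eta nz by (simp add: power_mono)
  then show ?thesis using F t1 t2 t4 t5 t6 hU' by simp
qed

lemma transpose_add': "transpose (M + N) = transpose M + transpose (N::real^'n^'m)"
  by (simp add: transpose_def vec_eq_iff)

lemma cs_scalar:
  fixes a b c k :: real
  assumes S: "\<And>s. 0 \<le> s^2 * b - 2 * s * a + c" and c: "c \<le> k * a" and a: "0 \<le> a" and b: "0 \<le> b" and k: "0 \<le> k"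
  shows "a \<le> k * b"
proof (cases "b > 0")
  case True
  have "0 \<le> (a/b)^2 * b - 2 * (a/b) * a + c" by (rule S)
  also have "(a/b)^2 * b - 2 * (a/b) * a + c = c - a^2 / b" using True by (simp add: field_simps power2_eq_square)
  finally have "a^2 \<le> c * b" using True by (simp add: field_simps)
  also have "\<dots> \<le> k * a * b" using c True by (simp add: mult_right_mono)
  finally have "a * a \<le> (k * b) * a" by (simp add: power2_eq_square algebra_simps)
  then show ?thesis using a by (cases "a = 0") (simp_all add: mult_le_cancel_right k b)
next
  case False
  then have b0: "b = 0" using b by simp
  show ?thesis
  proof (rule ccontr)
    assume "\<not> a \<le> k * b"
    then have ap: "a > 0" using b0 by simp
    have "0 \<le> ((c+1)/(2*a))^2 * b - 2 * ((c+1)/(2*a)) * a + c" by (rule S)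
    also have "\<dots> = -1" using b0 ap by (simp add: field_simps)
    finally show False by simp
  qed
qed

lemma sym_inner: "transpose P = P \<Longrightarrow> u \<bullet> ((P::real^'n^'n) *v v) = v \<bullet> (P *v u)"
  by (metis inner_vmul transpose_matrix_vector)

lemma ctrl_step:
  fixes A P Y W :: "real^'n^'n" and B :: "real^'u^'n" and X K :: "real^'n^'u"
    and x :: "real^'n" and r :: "real^'u"
  assumes pd: "pos_def (blk3 ((1 - \<rho>) *\<^sub>R P - \<sigma> *\<^sub>R (B ** transpose B))
                     (A ** Y + \<alpha> *\<^sub>R (B ** X))
                     (0 :: real^'u^'n)
                     (transpose Y + Y - P)
                     (\<beta> *\<^sub>R transpose X)
                     (\<sigma> *\<^sub>R mat 1))"
    and sig: "\<sigma> > 0" and PP: "pos_def P" and rho: "\<rho> \<le> 1"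
    and KY: "K ** Y = X" and PW: "P ** W = mat 1"
    and nr: "norm r \<le> norm (K *v x)"
  shows "(A *v x + \<alpha> *\<^sub>R (B *v (K *v x)) + \<beta> *\<^sub>R (B *v r)) \<bullet> (W *v (A *v x + \<alpha> *\<^sub>R (B *v (K *v x)) + \<beta> *\<^sub>R (B *v r)))
         \<le> (1 - \<rho>) * (x \<bullet> (W *v x))"
proof -
  define g where "g = A *v x + \<alpha> *\<^sub>R (B *v (K *v x)) + \<beta> *\<^sub>R (B *v r)"
  have Psym: "transpose P = P" using PP by (simp add: pos_def_def)
  have pd': "pos_def (blk3 ((1 - \<rho>) *\<^sub>R P - \<sigma> *\<^sub>R (transpose (transpose B) ** transpose B))
                     (transpose (transpose Y ** transpose A + \<alpha> *\<^sub>R (transpose X ** transpose B)))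
                     (0 :: real^'u^'n)
                     (transpose Y + transpose (transpose Y) - P)
                     (\<beta> *\<^sub>R transpose X)
                     (\<sigma> *\<^sub>R mat 1))"
    using pd by (simp add: transpose_add' transpose_scalar matrix_transpose_mul add.commute)
  define y where "y = W *v g"
  define w where "w = transpose B *v y"
  define z :: "real^'u" where "z = (if K *v x = 0 then 0 else ((w \<bullet> r) / (norm (K *v x))^2) *\<^sub>R (K *v x))"
  have nz: "norm z \<le> norm (transpose B *v y)"
  proof (cases "K *v x = 0")
    case True then show ?thesis by (simp add: z_def)
  next
    case False
    then have kp: "norm (K *v x) > 0" by simp
    have "norm z = \<bar>w \<bullet> r\<bar> / norm (K *v x)"
      using False kp by (simp add: z_def power2_eq_square)
    also have "\<dots> \<le> norm w * norm r / norm (K *v x)"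
      using kp by (simp add: divide_right_mono Cauchy_Schwarz_ineq2)
    also have "\<dots> \<le> norm w" using kp nr
      by (simp add: divide_le_eq mult_left_mono)
    finally show ?thesis by (simp add: w_def)
  qed
  define f where "f = transpose A *v y + \<alpha> *\<^sub>R (transpose K *v w) + \<beta> *\<^sub>R (transpose K *v z)"
  have XK: "transpose Y ** transpose K = transpose X" using KY by (metis matrix_transpose_mul)
  have hU: "transpose Y *v f = (transpose Y ** transpose A + \<alpha> *\<^sub>R (transpose X ** transpose B)) *v y + \<beta> *\<^sub>R (transpose X *v z)"
    unfolding f_def w_def XK[symmetric]
    by (simp only: matrix_vector_mult_add_rdistrib matrix_vector_right_distrib matrix_vector_mul_assoc
        scaleR_matrix_vector_assoc[symmetric] matrix_vector_mult_scaleR matrix_mul_assoc)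
  have D: "f \<bullet> (P *v f) \<le> (1 - \<rho>) * (y \<bullet> (P *v y))"
    by (rule obs_step[OF pd' sig nz hU])
  have Kz: "(K *v x) \<bullet> z = w \<bullet> r"
    using nr by (cases "K *v x = 0") (auto simp: z_def power2_norm_eq_inner)
  have Kz': "z \<bullet> (K *v x) = y \<bullet> (B *v r)"
    using Kz by (simp add: w_def inner_commute inner_vmul)
  have xf: "x \<bullet> f = g \<bullet> y"
    unfolding f_def g_def w_def
    by (simp add: inner_add_right inner_add_left inner_vmul Kz' inner_commute matrix_vector_mul_assoc)
  have yPy: "y \<bullet> (P *v y) = g \<bullet> y"
    by (simp add: y_def matrix_vector_mul_assoc PW inner_commute)
  define u where "u = W *v x"
  have xPu: "x = P *v u" by (simp add: u_def matrix_vector_mul_assoc PW)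
  have S: "0 \<le> s^2 * (u \<bullet> (P *v u)) - 2 * s * (x \<bullet> f) + f \<bullet> (P *v f)" for s
  proof -
    have "0 \<le> (s *\<^sub>R u - f) \<bullet> (P *v (s *\<^sub>R u - f))" by (rule psd_of_pos_def[OF PP])
    also have "\<dots> = s^2 * (u \<bullet> (P *v u)) - 2 * s * (x \<bullet> f) + f \<bullet> (P *v f)"
      using sym_inner[OF Psym, of u f]
      by (simp add: xPu matrix_vector_mult_diff_distrib inner_diff_left inner_diff_right
           matrix_vector_mult_scaleR power2_eq_square algebra_simps inner_commute)
    finally show ?thesis .
  qed
  have a0: "0 \<le> x \<bullet> f" using xf yPy psd_of_pos_def[OF PP, of y] by simp
  have b0: "0 \<le> u \<bullet> (P *v u)" by (rule psd_of_pos_def[OF PP])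
  have "x \<bullet> f \<le> (1 - \<rho>) * (u \<bullet> (P *v u))"
    by (rule cs_scalar[OF S]) (use D xf yPy a0 b0 rho in auto)
  moreover have "u \<bullet> (P *v u) = x \<bullet> (W *v x)" by (simp add: u_def matrix_vector_mul_assoc PW inner_commute)
  moreover have "x \<bullet> f = g \<bullet> (W *v g)" using xf by (simp add: y_def)
  ultimately show ?thesis by (simp add: g_def)
qed

lemma inv_of_inj:
  fixes M :: "real^'n^'n"
  assumes "\<And>v. M *v v = 0 \<Longrightarrow> v = 0"
  shows "M ** matrix_inv M = mat 1 \<and> matrix_inv M ** M = mat 1"
proof -
  have "inj ((*v) M)"
  proof (rule injI)
    fix a b assume "M *v a = M *v b"
    then have "M *v (a - b) = 0" by (simp add: matrix_vector_mult_diff_distrib)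
    then show "a = b" by (metis assms eq_iff_diff_eq_0)
  qed
  then have "invertible M" using matrix_left_invertible_injective invertible_left_inverse by blast
  then obtain M' where "M ** M' = mat 1 \<and> M' ** M = mat 1" unfolding invertible_def by blast
  then show ?thesis unfolding matrix_inv_def by (rule someI)
qed

lemma pd_inj: "pos_def P \<Longrightarrow> P *v v = 0 \<Longrightarrow> v = 0"
  unfolding pos_def_def by force

lemma blk_mid:
  fixes q :: "real^'b"
  assumes "pos_def (blk3 M11 M12 (M13::real^'c^'a) M22 M23 M33)" "q \<noteq> 0"
  shows "0 < q \<bullet> (M22 *v q)"
proof -
  define v :: "real^('a + ('b + 'c))" where "v = (\<chi> i. case i of Inl a \<Rightarrow> 0 | Inr (Inl b) \<Rightarrow> q$b | Inr (Inr c) \<Rightarrow> 0)"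
  have "v \<noteq> 0"
  proof
    assume "v = 0"
    then have "\<And>b. q $ b = 0" by (metis v_def vec_lambda_beta zero_index sum.case(2) sum.case(1))
    then show False using assms(2) by (simp add: vec_eq_iff)
  qed
  then have "0 < v \<bullet> (blk3 M11 M12 M13 M22 M23 M33 *v v)" using assms(1) unfolding pos_def_def by blast
  also have "\<dots> = q \<bullet> (M22 *v q)"
    by (simp add: v_def blk3_def inner_vec_def matrix_vector_mult_def sum_UNIV_Plus)
  finally show ?thesis .
qed

lemma mid_inj:
  fixes Y P :: "real^'n^'n"
  assumes PP: "pos_def P" and H: "\<And>q. q \<noteq> 0 \<Longrightarrow> 0 < q \<bullet> ((transpose Y + Y - P) *v q)"
  shows "Y *v v = 0 \<Longrightarrow> v = 0"
proof (rule ccontr)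
  assume Yv: "Y *v v = 0" and nv: "v \<noteq> 0"
  have "0 < v \<bullet> ((transpose Y + Y - P) *v v)" using H nv by blast
  also have "\<dots> = - (v \<bullet> (P *v v))"
    using Yv by (simp add: matrix_vector_mult_diff_rdistrib matrix_vector_mult_add_rdistrib inner_diff_right inner_add_right inner_vmul)
  finally show False using psd_of_pos_def[OF PP, of v] by simp
qed

lemma qf_lower:
  fixes M :: "real^'n^'n"
  assumes "\<And>v. v \<noteq> 0 \<Longrightarrow> 0 < v \<bullet> (M *v v)"
  shows "\<exists>m>0. \<forall>v. m * (norm v)^2 \<le> v \<bullet> (M *v v)"
proof -
  have cont: "continuous_on (sphere 0 1) (\<lambda>v::real^'n. v \<bullet> (M *v v))"
    by (intro continuous_intros continuous_on_id linear_continuous_on) auto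
  have ne: "sphere (0::real^'n) 1 \<noteq> {}"
    using norm_axis_1[of undefined] by (metis empty_iff mem_sphere_0)
  obtain v0 where v0: "v0 \<in> sphere 0 1" and mn: "\<forall>y\<in>sphere 0 1. v0 \<bullet> (M *v v0) \<le> y \<bullet> (M *v y)"
    using continuous_attains_inf[OF compact_sphere ne cont] by blast
  have pos: "0 < v0 \<bullet> (M *v v0)" using v0 assms by (metis mem_sphere_0 norm_zero zero_neq_one)
  show ?thesis
  proof (intro exI[of _ "v0 \<bullet> (M *v v0)"] conjI pos allI)
    fix v :: "real^'n"
    show "(v0 \<bullet> (M *v v0)) * (norm v)^2 \<le> v \<bullet> (M *v v)"
    proof (cases "v = 0")
      case True then show ?thesis by simp
    next
      case False
      define u where "u = (1 / norm v) *\<^sub>R v"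
      have u1: "u \<in> sphere 0 1" using False by (simp add: u_def)
      have vu: "v = norm v *\<^sub>R u" using False by (simp add: u_def)
      have "v \<bullet> (M *v v) = (norm v)^2 * (u \<bullet> (M *v u))"
        by (subst vu, subst vu) (simp add: matrix_vector_mult_scaleR power2_eq_square)
      moreover have "v0 \<bullet> (M *v v0) \<le> u \<bullet> (M *v u)" using mn u1 by blast
      ultimately show ?thesis by (simp add: mult_right_mono mult.commute)
    qed
  qed
qed

lemma qf_upper:
  fixes M :: "real^'n^'n"
  shows "v \<bullet> (M *v v) \<le> onorm ((*v) M) * (norm v)^2"
proof -
  have "v \<bullet> (M *v v) \<le> norm v * norm (M *v v)" by (rule Cauchy_Schwarz_ineq2[THEN abs_le_D1])
  also have "\<dots> \<le> norm v * (onorm ((*v) M) * norm v)"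
    by (rule mult_left_mono[OF onorm[OF matrix_vector_mul_bounded_linear]]) simp
  finally show ?thesis by (simp add: power2_eq_square algebra_simps)
qed

lemma mv_bound: "norm ((M::real^'n^'m) *v v) \<le> onorm ((*v) M) * norm v"
  by (rule onorm[OF matrix_vector_mul_bounded_linear])

lemma sector:
  fixes S :: "real^'n \<Rightarrow> real^'n" and J :: "real^'n \<Rightarrow> real^'n^'n"
  assumes D: "\<And>v. (S has_derivative (\<lambda>h. J v *v h)) (at v)"
    and Jb: "\<And>v. spec_norm (J v - \<alpha> *\<^sub>R mat 1) \<le> \<beta>"
  shows "norm (S a - S b - \<alpha> *\<^sub>R (a - b)) \<le> \<beta> * norm (a - b)"
proof -
  have "norm ((S a - \<alpha> *\<^sub>R a) - (S b - \<alpha> *\<^sub>R b)) \<le> \<beta> * norm (a - b)"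
  proof (rule differentiable_bound[where S=UNIV and f="\<lambda>v. S v - \<alpha> *\<^sub>R v" and f'="\<lambda>v h. J v *v h - \<alpha> *\<^sub>R h"])
    fix x :: "real^'n"
    show "((\<lambda>v. S v - \<alpha> *\<^sub>R v) has_derivative (\<lambda>h. J x *v h - \<alpha> *\<^sub>R h)) (at x within UNIV)"
      using D[of x] by (auto intro!: derivative_eq_intros)
    have "(\<lambda>h. J x *v h - \<alpha> *\<^sub>R h) = (\<lambda>h. (J x - \<alpha> *\<^sub>R mat 1) *v h)"
      by (simp add: fun_eq_iff matrix_vector_mult_diff_rdistrib scaleR_matrix_vector_assoc[symmetric])
    then show "onorm (\<lambda>h. J x *v h - \<alpha> *\<^sub>R h) \<le> \<beta>" using Jb[of x] by (simp add: spec_norm_def)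
  qed auto
  then show ?thesis by (simp add: algebra_simps)
qed

lemma assemble:
  fixes rc ro K1 mW mQ MW MQ :: real
  assumes rc: "0 < rc" "rc < 1" and ro: "0 < ro" "ro < 1" and K1: "0 \<le> K1"
    and mW: "0 < mW" and mQ: "0 < mQ" and MW: "0 \<le> MW" and MQ: "0 \<le> MQ"
  shows "\<exists>cc lam. cc > 0 \<and> 0 < lam \<and> lam < 1 \<and>
    (\<forall>a q nx ne :: nat \<Rightarrow> real.
      (\<forall>k. 0 \<le> nx k \<and> 0 \<le> ne k \<and> a (Suc k) \<le> (1 - rc/2) * a k + K1 * q k \<and> q (Suc k) \<le> (1 - ro) * q k
          \<and> mW * (nx k)^2 \<le> a k \<and> mQ * (ne k)^2 \<le> q k) \<and> a 0 \<le> MW * (nx 0)^2 \<and> q 0 \<le> MQ * (ne 0)^2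
      \<longrightarrow> (\<forall>k. nx k + ne k \<le> cc * lam^k * (nx 0 + ne 0)))"
proof -
  define c where "c = 2 * K1 / ro + 1"
  define l where "l = max (1 - rc/2) (1 - ro/2)"
  define m0 where "m0 = min mW (c * mQ)"
  define M0 where "M0 = MW + c * MQ + 1"
  have cpos: "c > 0" using K1 ro by (simp add: c_def add_nonneg_pos)
  have m0: "m0 > 0" using mW mQ cpos by (simp add: m0_def)
  have M0: "M0 > 0" unfolding M0_def using MW mult_nonneg_nonneg[of c MQ] MQ cpos by linarith
  have l0: "0 < l" "l < 1" using rc ro by (auto simp: l_def)
  have Kc: "K1 + c * (1 - ro) \<le> c * (1 - ro/2)" using ro by (simp add: c_def field_simps)
  show ?thesis
  proof (rule exI[of _ "sqrt (2 * M0 / m0)"], rule exI[of _ "sqrt l"], intro conjI allI impI)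
    show "sqrt (2 * M0 / m0) > 0" using M0 m0 by simp
    show "0 < sqrt l" using l0 by auto
    show "sqrt l < 1" using l0 by auto
    fix a q nx ne :: "nat \<Rightarrow> real" and k :: nat
    assume H: "(\<forall>k. 0 \<le> nx k \<and> 0 \<le> ne k \<and> a (Suc k) \<le> (1 - rc/2) * a k + K1 * q k \<and> q (Suc k) \<le> (1 - ro) * q k
          \<and> mW * (nx k)^2 \<le> a k \<and> mQ * (ne k)^2 \<le> q k) \<and> a 0 \<le> MW * (nx 0)^2 \<and> q 0 \<le> MQ * (ne 0)^2"
    define V where "V k = a k + c * q k" for k
    have a0: "0 \<le> a k" "0 \<le> q k" for k
      using H mW mQ by (meson order_trans zero_le_power2 mult_nonneg_nonneg less_imp_le)+
    have step: "V (Suc k) \<le> l * V k" for k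
    proof -
      have "V (Suc k) \<le> (1 - rc/2) * a k + K1 * q k + c * ((1 - ro) * q k)"
        using H cpos unfolding V_def by (smt (verit) mult_left_mono)
      also have "\<dots> = (1 - rc/2) * a k + (K1 + c * (1 - ro)) * q k" by (simp add: algebra_simps)
      also have "\<dots> \<le> l * a k + (l * c) * q k"
      proof (rule add_mono)
        show "(1 - rc/2) * a k \<le> l * a k" using a0 by (intro mult_right_mono) (auto simp: l_def)
        have "K1 + c * (1 - ro) \<le> l * c" using Kc cpos by (smt (verit) l_def mult_right_mono max.cobounded2 mult.commute)
        then show "(K1 + c * (1 - ro)) * q k \<le> (l * c) * q k" using a0 by (intro mult_right_mono) auto
      qed
      finally show ?thesis by (simp add: V_def algebra_simps)
    qed
    have Vk: "V k \<le> l^k * V 0" for k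
    proof (induction k)
      case 0 then show ?case by simp
    next
      case (Suc k)
      have "V (Suc k) \<le> l * V k" by (rule step)
      also have "\<dots> \<le> l * (l^k * V 0)" using Suc l0 by (intro mult_left_mono) auto
      finally show ?case by simp
    qed
    have V0: "V 0 \<le> M0 * (nx 0 + ne 0)^2"
    proof -
      have "V 0 \<le> MW * (nx 0)^2 + c * (MQ * (ne 0)^2)" using H cpos unfolding V_def
        by (smt (verit) mult_left_mono)
      also have "\<dots> \<le> M0 * (nx 0)^2 + M0 * (ne 0)^2"
      proof (rule add_mono)
        have cm: "0 \<le> c * MQ" using cpos MQ by simp
        show "MW * (nx 0)^2 \<le> M0 * (nx 0)^2" using cm by (intro mult_right_mono) (auto simp: M0_def)
        show "c * (MQ * (ne 0)^2) \<le> M0 * (ne 0)^2" unfolding mult.assoc[symmetric]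
          using cm MW by (intro mult_right_mono) (auto simp: M0_def)
      qed
      also have "\<dots> \<le> M0 * (nx 0 + ne 0)^2" using H M0
        by (simp add: power2_eq_square algebra_simps)
      finally show ?thesis .
    qed
    have low: "m0 * ((nx k)^2 + (ne k)^2) \<le> V k"
    proof -
      have "m0 * (nx k)^2 \<le> mW * (nx k)^2" by (intro mult_right_mono) (auto simp: m0_def)
      moreover have "m0 * (ne k)^2 \<le> c * mQ * (ne k)^2" by (intro mult_right_mono) (auto simp: m0_def)
      moreover have "c * mQ * (ne k)^2 \<le> c * q k" using H cpos by (simp add: mult.assoc)
      moreover have "mW * (nx k)^2 \<le> a k" using H by blast
      ultimately show ?thesis unfolding V_def by (simp add: algebra_simps)
    qed
    have sl: "sqrt l ^ (k * 2) = l ^ k"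
      using l0 by (metis power_mult mult.commute real_sqrt_pow2 less_imp_le)
    have "(nx k + ne k)^2 \<le> 2 * ((nx k)^2 + (ne k)^2)"
      using zero_le_square[of "nx k - ne k"] by (simp add: power2_eq_square algebra_simps)
    also have "\<dots> \<le> 2 * (V k / m0)" using low m0 by (simp add: field_simps)
    also have "\<dots> \<le> 2 * (l^k * (M0 * (nx 0 + ne 0)^2) / m0)"
      using Vk[of k] V0 l0 m0 by (intro mult_left_mono divide_right_mono) (auto intro: order_trans mult_left_mono)
    also have "\<dots> = (sqrt (2 * M0 / m0) * sqrt l ^ k * (nx 0 + ne 0))^2"
      using l0 M0 m0 sl by (simp add: power_mult_distrib real_sqrt_pow2 power_mult[symmetric] mult.commute[of 2] power2_eq_square[symmetric])
    finally show "nx k + ne k \<le> sqrt (2 * M0 / m0) * sqrt l ^ k * (nx 0 + ne 0)"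
      by (rule power2_le_imp_le) (use H M0 m0 l0 in auto)
  qed
qed


lemma young:
  fixes W :: "real^'n^'n"
  assumes psd: "\<And>v. 0 \<le> v \<bullet> (W *v v)" and ep: "\<epsilon> > 0"
  shows "(g + h) \<bullet> (W *v (g + h)) \<le> (1 + \<epsilon>) * (g \<bullet> (W *v g)) + (1 + 1/\<epsilon>) * (h \<bullet> (W *v h))"
proof -
  have "0 \<le> (\<epsilon> *\<^sub>R g - h) \<bullet> (W *v (\<epsilon> *\<^sub>R g - h))" by (rule psd)
  also have "\<dots> = \<epsilon>^2 * (g \<bullet> (W *v g)) - \<epsilon> * (g \<bullet> (W *v h) + h \<bullet> (W *v g)) + h \<bullet> (W *v h)"
    by (simp add: matrix_vector_mult_diff_distrib matrix_vector_mult_scaleR inner_diff_left inner_diff_right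
        power2_eq_square algebra_simps)
  finally have "\<epsilon> * (g \<bullet> (W *v h) + h \<bullet> (W *v g)) \<le> \<epsilon> * (\<epsilon> * (g \<bullet> (W *v g)) + (1/\<epsilon>) * (h \<bullet> (W *v h)))"
    using ep by (simp add: power2_eq_square algebra_simps)
  then have X: "g \<bullet> (W *v h) + h \<bullet> (W *v g) \<le> \<epsilon> * (g \<bullet> (W *v g)) + (1/\<epsilon>) * (h \<bullet> (W *v h))"
    using ep by (simp add: mult_le_cancel_left_pos)
  have "(g + h) \<bullet> (W *v (g + h)) = g \<bullet> (W *v g) + (g \<bullet> (W *v h) + h \<bullet> (W *v g)) + h \<bullet> (W *v h)"
    by (simp add: matrix_vector_right_distrib inner_add_left inner_add_right)
  also have "\<dots> \<le> g \<bullet> (W *v g) + (\<epsilon> * (g \<bullet> (W *v g)) + (1/\<epsilon>) * (h \<bullet> (W *v h))) + h \<bullet> (W *v h)"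
    using X by linarith
  finally show ?thesis by (simp add: algebra_simps)
qed

lemma sector_split:
  fixes d w :: "real^'n"
  assumes "norm (d - \<alpha> *\<^sub>R w) \<le> \<beta> * norm w" "0 \<le> \<beta>"
  shows "\<exists>r. d = \<alpha> *\<^sub>R w + \<beta> *\<^sub>R r \<and> norm r \<le> norm w"
proof (cases "\<beta> = 0")
  case True
  then have "d = \<alpha> *\<^sub>R w" using assms by simp
  then show ?thesis using True by (intro exI[of _ 0]) simp
next
  case False
  then have bp: "\<beta> > 0" using assms by simp
  define r where "r = (1/\<beta>) *\<^sub>R (d - \<alpha> *\<^sub>R w)"
  have "d = \<alpha> *\<^sub>R w + \<beta> *\<^sub>R r" using bp by (simp add: r_def)
  moreover have "norm r \<le> norm w" using bp assms(1) by (simp add: r_def divide_le_eq mult.commute)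
  ultimately show ?thesis by blast
qed

lemma obs_full:
  fixes A U Q :: "real^'n^'n" and C :: "real^'n^'m" and V L :: "real^'m^'n"
    and e :: "real^'n" and a b :: "real^'m" and Sy :: "real^'m \<Rightarrow> real^'m"
  assumes pd: "pos_def (blk3 ((1 - \<rho>) *\<^sub>R Q - \<eta> *\<^sub>R (transpose C ** C))
                     (transpose (U ** A + \<alpha> *\<^sub>R (V ** C)))
                     (0 :: real^'m^'n)
                     (U + transpose U - Q)
                     (\<beta> *\<^sub>R V)
                     (\<eta> *\<^sub>R mat 1))"
    and eta: "\<eta> > 0" and UL: "U ** L = V" and b0: "0 \<le> \<beta>"
    and sec: "norm (Sy a - Sy b - \<alpha> *\<^sub>R (a - b)) \<le> \<beta> * norm (a - b)"
    and ab: "a - b = C *v e"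
  shows "(A *v e + L *v (Sy a - Sy b)) \<bullet> (Q *v (A *v e + L *v (Sy a - Sy b))) \<le> (1 - \<rho>) * (e \<bullet> (Q *v e))"
proof -
  obtain r where r: "Sy a - Sy b = \<alpha> *\<^sub>R (C *v e) + \<beta> *\<^sub>R r" "norm r \<le> norm (C *v e)"
    using sector_split[OF sec[unfolded ab] b0] by blast
  show ?thesis
  proof (rule obs_step[OF pd eta r(2)])
    show "U *v (A *v e + L *v (Sy a - Sy b)) = (U ** A + \<alpha> *\<^sub>R (V ** C)) *v e + \<beta> *\<^sub>R (V *v r)"
      unfolding r(1) UL[symmetric]
      by (simp add: matrix_vector_right_distrib matrix_vector_mult_add_rdistrib matrix_vector_mul_assoc
          matrix_vector_mult_scaleR scaleR_matrix_vector_assoc[symmetric] matrix_mul_assoc)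
  qed
qed


lemma ctrl_full:
  fixes A P Y W :: "real^'n^'n" and B :: "real^'u^'n" and X K :: "real^'n^'u"
    and x xh :: "real^'n" and Su :: "real^'u \<Rightarrow> real^'u"
  assumes pd: "pos_def (blk3 ((1 - \<rho>) *\<^sub>R P - \<sigma> *\<^sub>R (B ** transpose B))
                     (A ** Y + \<alpha> *\<^sub>R (B ** X))
                     (0 :: real^'u^'n)
                     (transpose Y + Y - P)
                     (\<beta> *\<^sub>R transpose X)
                     (\<sigma> *\<^sub>R mat 1))"
    and sig: "\<sigma> > 0" and PP: "pos_def P" and rho: "0 < \<rho>" "\<rho> \<le> 1"
    and KY: "K ** Y = X" and PW: "P ** W = mat 1"
    and secu: "\<And>m. norm (Su m - \<alpha> *\<^sub>R m) \<le> \<beta> * norm m" and a0: "0 \<le> \<alpha>" and b0: "0 \<le> \<beta>"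
    and psdW: "\<And>v. 0 \<le> v \<bullet> (W *v v)"
  shows "(A *v x + B *v Su (K *v xh)) \<bullet> (W *v (A *v x + B *v Su (K *v xh)))
     \<le> (1 - \<rho>/2) * (x \<bullet> (W *v x))
        + (1 + 2/\<rho>) * (onorm ((*v) W) * (onorm ((*v) B) * (\<alpha> + \<beta>) * onorm ((*v) K))^2 * (norm (xh - x))^2)"
proof -
  define m where "m = K *v xh"
  obtain d where d: "Su m = \<alpha> *\<^sub>R m + \<beta> *\<^sub>R d" "norm d \<le> norm m"
    using sector_split[OF secu b0] by blast
  define r where "r = (if norm d \<le> norm (K *v x) then d else (norm (K *v x) / norm d) *\<^sub>R d)"
  have nr: "norm r \<le> norm (K *v x)" by (auto simp: r_def)
  have Ke: "K *v (xh - x) = m - K *v x" by (simp add: m_def matrix_vector_mult_diff_distrib)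
  have dr: "norm (d - r) \<le> norm (K *v (xh - x))"
  proof (cases "norm d \<le> norm (K *v x)")
    case True then show ?thesis by (simp add: r_def)
  next
    case False
    then have dp: "norm d > 0" using norm_ge_zero[of "K *v x"] by linarith
    have "d - r = (1 - norm (K *v x) / norm d) *\<^sub>R d" using False by (simp add: r_def algebra_simps)
    then have "norm (d - r) = (1 - norm (K *v x) / norm d) * norm d"
      using False dp by simp
    also have "\<dots> = norm d - norm (K *v x)" using dp by (simp add: field_simps)
    also have "\<dots> \<le> norm m - norm (K *v x)" using d(2) by simp
    also have "\<dots> \<le> norm (m - K *v x)" by (rule norm_triangle_ineq2)
    finally show ?thesis by (simp add: Ke)
  qed
  define g where "g = A *v x + \<alpha> *\<^sub>R (B *v (K *v x)) + \<beta> *\<^sub>R (B *v r)"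
  define h where "h = B *v (\<alpha> *\<^sub>R (K *v (xh - x)) + \<beta> *\<^sub>R (d - r))"
  have split: "A *v x + B *v Su (K *v xh) = g + h"
    unfolding g_def h_def m_def[symmetric] d(1) Ke
    by (simp add: matrix_vector_right_distrib matrix_vector_mult_scaleR algebra_simps)
  define nB where "nB = onorm ((*v) B)"
  define nK where "nK = onorm ((*v) K)"
  define MW where "MW = onorm ((*v) W)"
  have nB0: "0 \<le> nB" unfolding nB_def by (rule onorm_pos_le[OF matrix_vector_mul_bounded_linear])
  have nK0: "0 \<le> nK" unfolding nK_def by (rule onorm_pos_le[OF matrix_vector_mul_bounded_linear])
  have MW0: "0 \<le> MW" unfolding MW_def by (rule onorm_pos_le[OF matrix_vector_mul_bounded_linear])
  have nKe: "norm (K *v (xh - x)) \<le> nK * norm (xh - x)" unfolding nK_def by (rule mv_bound)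
  have "norm h \<le> nB * norm (\<alpha> *\<^sub>R (K *v (xh - x)) + \<beta> *\<^sub>R (d - r))" unfolding h_def nB_def by (rule mv_bound)
  also have "\<dots> \<le> nB * (\<alpha> * norm (K *v (xh - x)) + \<beta> * norm (K *v (xh - x)))"
  proof (rule mult_left_mono[OF _ nB0])
    have "norm (\<alpha> *\<^sub>R (K *v (xh - x)) + \<beta> *\<^sub>R (d - r)) \<le> \<alpha> * norm (K *v (xh - x)) + \<beta> * norm (d - r)"
      using a0 b0 norm_triangle_ineq[of "\<alpha> *\<^sub>R (K *v (xh - x))" "\<beta> *\<^sub>R (d - r)"] by simp
    also have "\<dots> \<le> \<alpha> * norm (K *v (xh - x)) + \<beta> * norm (K *v (xh - x))"
      using dr b0 by (simp add: mult_left_mono)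
    finally show "norm (\<alpha> *\<^sub>R (K *v (xh - x)) + \<beta> *\<^sub>R (d - r)) \<le> \<alpha> * norm (K *v (xh - x)) + \<beta> * norm (K *v (xh - x))" .
  qed
  also have "\<dots> = nB * (\<alpha> + \<beta>) * norm (K *v (xh - x))" by (simp add: algebra_simps)
  also have "\<dots> \<le> nB * (\<alpha> + \<beta>) * (nK * norm (xh - x))"
    using nB0 a0 b0 nKe by (intro mult_left_mono) auto
  finally have nh: "norm h \<le> nB * (\<alpha> + \<beta>) * nK * norm (xh - x)" by (simp add: mult.assoc)
  have hW: "h \<bullet> (W *v h) \<le> MW * (nB * (\<alpha> + \<beta>) * nK)^2 * (norm (xh - x))^2"
  proof -
    have "h \<bullet> (W *v h) \<le> MW * (norm h)^2" unfolding MW_def by (rule qf_upper)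
    also have "\<dots> \<le> MW * (nB * (\<alpha> + \<beta>) * nK * norm (xh - x))^2"
      using nh MW0 by (intro mult_left_mono power_mono) auto
    finally show ?thesis by (simp add: power_mult_distrib mult.assoc)
  qed
  have gW: "g \<bullet> (W *v g) \<le> (1 - \<rho>) * (x \<bullet> (W *v x))"
    unfolding g_def by (rule ctrl_step[OF pd sig PP rho(2) KY PW nr])
  have "(g + h) \<bullet> (W *v (g + h)) \<le> (1 + \<rho>/2) * (g \<bullet> (W *v g)) + (1 + 1/(\<rho>/2)) * (h \<bullet> (W *v h))"
    by (rule young[OF psdW]) (use rho in simp)
  also have "\<dots> \<le> (1 + \<rho>/2) * ((1 - \<rho>) * (x \<bullet> (W *v x))) + (1 + 2/\<rho>) * (MW * (nB * (\<alpha> + \<beta>) * nK)^2 * (norm (xh - x))^2)"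
  proof (rule add_mono)
    show "(1 + \<rho>/2) * (g \<bullet> (W *v g)) \<le> (1 + \<rho>/2) * ((1 - \<rho>) * (x \<bullet> (W *v x)))"
      using rho gW by (intro mult_left_mono) auto
    have "0 \<le> 1 + 2/\<rho>" using rho by (simp add: add_nonneg_nonneg)
    then show "(1 + 1/(\<rho>/2)) * (h \<bullet> (W *v h)) \<le> (1 + 2/\<rho>) * (MW * (nB * (\<alpha> + \<beta>) * nK)^2 * (norm (xh - x))^2)"
      using hW by (simp add: mult_left_mono)
  qed
  also have "(1 + \<rho>/2) * ((1 - \<rho>) * (x \<bullet> (W *v x))) \<le> (1 - \<rho>/2) * (x \<bullet> (W *v x))"
  proof -
    have "(1 + \<rho>/2) * (1 - \<rho>) \<le> 1 - \<rho>/2" using rho by (simp add: algebra_simps power2_eq_square)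
    then show ?thesis using psdW[of x] by (metis mult.assoc mult_right_mono)
  qed
  finally show ?thesis unfolding split MW_def nB_def nK_def by simp
qed
theorem mainTheorem6:
  fixes A :: "real^'nx^'nx" and B :: "real^'nu^'nx"
    and C :: "real^'nx^'ny" and D :: "real^'nu^'ny"
    and \<mu>u \<nu>u \<mu>y \<nu>y :: real
    and P Y :: "real^'nx^'nx" and X :: "real^'nx^'nu" and \<sigma> \<rho>c :: real
    and Q U :: "real^'nx^'nx" and V :: "real^'ny^'nx" and \<eta> \<rho>o :: real
    and Su :: "real^'nu \<Rightarrow> real^'nu" and Ju :: "real^'nu \<Rightarrow> real^'nu^'nu"
    and Sy :: "real^'ny \<Rightarrow> real^'ny" and Jy :: "real^'ny \<Rightarrow> real^'ny^'ny"
  assumes mu_u: "0 < \<mu>u" "\<mu>u \<le> \<nu>u"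
    and mu_y: "0 < \<mu>y" "\<mu>y \<le> \<nu>y"
    and LMI_c: "pos_def P" "\<sigma> > 0" "0 < \<rho>c" "\<rho>c < 1"
      "pos_def (blk3 ((1 - \<rho>c) *\<^sub>R P - \<sigma> *\<^sub>R (B ** transpose B))
                     (A ** Y + ((\<nu>u + \<mu>u) / 2) *\<^sub>R (B ** X))
                     (0 :: real^'nu^'nx)
                     (transpose Y + Y - P)
                     (((\<nu>u - \<mu>u) / 2) *\<^sub>R transpose X)
                     (\<sigma> *\<^sub>R mat 1))"
    and LMI_o: "pos_def Q" "\<eta> > 0" "0 < \<rho>o" "\<rho>o < 1"
      "pos_def (blk3 ((1 - \<rho>o) *\<^sub>R Q - \<eta> *\<^sub>R (transpose C ** C))
                     (transpose (U ** A + ((\<nu>y + \<mu>y) / 2) *\<^sub>R (V ** C)))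
                     (0 :: real^'ny^'nx)
                     (U + transpose U - Q)
                     (((\<nu>y - \<mu>y) / 2) *\<^sub>R V)
                     (\<eta> *\<^sub>R mat 1))"
    and Su_deriv: "\<And>v. (Su has_derivative (\<lambda>h. Ju v *v h)) (at v)"
    and Su_C1: "continuous_on UNIV Ju"
    and Su_0: "Su 0 = 0"
    and Ju_bound: "\<And>v. spec_norm (Ju v - ((\<nu>u + \<mu>u) / 2) *\<^sub>R mat 1) \<le> (\<nu>u - \<mu>u) / 2"
    and Sy_deriv: "\<And>z. (Sy has_derivative (\<lambda>h. Jy z *v h)) (at z)"
    and Sy_C1: "continuous_on UNIV Jy"
    and Jy_bound: "\<And>z. spec_norm (Jy z - ((\<nu>y + \<mu>y) / 2) *\<^sub>R mat 1) \<le> (\<nu>y - \<mu>y) / 2"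
  shows "\<exists>c lam. c > 0 \<and> 0 < lam \<and> lam < 1 \<and>
    (\<forall>x xh :: nat \<Rightarrow> real^'nx.
       (\<forall>k. x (Suc k) = A *v x k + B *v Su ((X ** matrix_inv Y) *v xh k)
          \<and> xh (Suc k) = A *v xh k + B *v Su ((X ** matrix_inv Y) *v xh k)
              + (matrix_inv U ** V) *v
                  (Sy (C *v xh k + D *v Su ((X ** matrix_inv Y) *v xh k))
                   - Sy (C *v x k + D *v Su ((X ** matrix_inv Y) *v xh k))))
       \<longrightarrow> (\<forall>k. norm (x k) + norm (xh k - x k)
                 \<le> c * lam ^ k * (norm (x 0) + norm (xh 0 - x 0))))"
proof -
  define au where "au = (\<nu>u + \<mu>u) / 2"
  define bu where "bu = (\<nu>u - \<mu>u) / 2"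
  define ay where "ay = (\<nu>y + \<mu>y) / 2"
  define by' where "by' = (\<nu>y - \<mu>y) / 2"
  have au0: "0 \<le> au" "0 \<le> bu" "0 \<le> by'" using mu_u mu_y by (auto simp: au_def bu_def by'_def)
  note Lc = LMI_c(5)[folded au_def bu_def]
  note Lo = LMI_o(5)[folded ay_def by'_def]
  define K where "K = X ** matrix_inv Y"
  define L where "L = matrix_inv U ** V"
  define W where "W = matrix_inv P"
  have PP: "pos_def P" by (rule LMI_c(1))
  have QQ: "pos_def Q" by (rule LMI_o(1))
  have YY: "matrix_inv Y ** Y = mat 1"
    using inv_of_inj[OF mid_inj[OF PP blk_mid[OF Lc]]] by blast
  have KY: "K ** Y = X" by (simp add: K_def matrix_mul_assoc[symmetric] YY)
  have UU: "U ** matrix_inv U = mat 1"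
  proof -
    have H: "\<And>q. q \<noteq> 0 \<Longrightarrow> 0 < q \<bullet> ((transpose U + U - Q) *v q)"
      using blk_mid[OF Lo] by (simp add: add.commute)
    show ?thesis using inv_of_inj[OF mid_inj[OF QQ H]] by blast
  qed
  have UL: "U ** L = V" by (simp add: L_def matrix_mul_assoc UU)
  have PW: "P ** W = mat 1" unfolding W_def using inv_of_inj[OF pd_inj[OF PP]] by blast
  have Wq: "v \<bullet> (W *v v) = (W *v v) \<bullet> (P *v (W *v v))" for v
    by (simp add: matrix_vector_mul_assoc PW inner_commute)
  have Wpos: "0 < v \<bullet> (W *v v)" if "v \<noteq> 0" for v
  proof -
    have "W *v v \<noteq> 0" using that by (metis matrix_vector_mul_assoc PW matrix_vector_mul_lid matrix_vector_mult_0_right)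
    then show ?thesis using PP unfolding Wq pos_def_def by blast
  qed
  have psdW: "0 \<le> v \<bullet> (W *v v)" for v using Wpos[of v] by (cases "v = 0") auto
  have Qpos: "0 < v \<bullet> (Q *v v)" if "v \<noteq> 0" for v using QQ that unfolding pos_def_def by blast
  obtain mW where mW: "mW > 0" "\<And>v. mW * (norm v)^2 \<le> v \<bullet> (W *v v)" using qf_lower[OF Wpos] by blast
  obtain mQ where mQ: "mQ > 0" "\<And>v. mQ * (norm v)^2 \<le> v \<bullet> (Q *v v)" using qf_lower[OF Qpos] by blast
  have secu: "norm (Su m - au *\<^sub>R m) \<le> bu * norm m" for m
    using sector[OF Su_deriv Ju_bound, of m 0] by (simp add: Su_0 au_def bu_def)
  have secy: "norm (Sy a - Sy b - ay *\<^sub>R (a - b)) \<le> by' * norm (a - b)" for a b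
    using sector[OF Sy_deriv Jy_bound, of a b] by (simp add: ay_def by'_def)
  define MW where "MW = onorm ((*v) W)"
  define MQ where "MQ = onorm ((*v) Q)"
  define C0 where "C0 = (1 + 2/\<rho>c) * (MW * (onorm ((*v) B) * (au + bu) * onorm ((*v) K))^2)"
  define K1 where "K1 = C0 / mQ"
  have MW0: "0 \<le> MW" unfolding MW_def by (rule onorm_pos_le[OF matrix_vector_mul_bounded_linear])
  have MQ0: "0 \<le> MQ" unfolding MQ_def by (rule onorm_pos_le[OF matrix_vector_mul_bounded_linear])
  have C00: "0 \<le> C0" unfolding C0_def using LMI_c(3) MW0 by (intro mult_nonneg_nonneg) (auto simp: add_nonneg_nonneg)
  have K10: "0 \<le> K1" unfolding K1_def using C00 mQ by simp
  obtain cc lam where CL: "cc > 0" "0 < lam" "lam < 1"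
    and MAIN: "\<And>a q nx ne :: nat \<Rightarrow> real.
      (\<forall>k. 0 \<le> nx k \<and> 0 \<le> ne k \<and> a (Suc k) \<le> (1 - \<rho>c/2) * a k + K1 * q k \<and> q (Suc k) \<le> (1 - \<rho>o) * q k
          \<and> mW * (nx k)^2 \<le> a k \<and> mQ * (ne k)^2 \<le> q k) \<and> a 0 \<le> MW * (nx 0)^2 \<and> q 0 \<le> MQ * (ne 0)^2
      \<Longrightarrow> (\<forall>k. nx k + ne k \<le> cc * lam^k * (nx 0 + ne 0))"
    using assemble[OF LMI_c(3,4) LMI_o(3,4) K10 mW(1) mQ(1) MW0 MQ0] by blast
  show ?thesis
  proof (rule exI[of _ cc], rule exI[of _ lam], intro conjI allI impI)
    show "cc > 0" "0 < lam" "lam < 1" by (fact CL)+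
    fix x xh :: "nat \<Rightarrow> real^'nx"
    assume rec0: "\<forall>k. x (Suc k) = A *v x k + B *v Su ((X ** matrix_inv Y) *v xh k)
          \<and> xh (Suc k) = A *v xh k + B *v Su ((X ** matrix_inv Y) *v xh k)
              + (matrix_inv U ** V) *v
                  (Sy (C *v xh k + D *v Su ((X ** matrix_inv Y) *v xh k))
                   - Sy (C *v x k + D *v Su ((X ** matrix_inv Y) *v xh k)))"
    note rec = rec0[folded K_def L_def]
    have step: "0 \<le> norm (x k) \<and> 0 \<le> norm (xh k - x k)
       \<and> x (Suc k) \<bullet> (W *v x (Suc k)) \<le> (1 - \<rho>c/2) * (x k \<bullet> (W *v x k)) + K1 * ((xh k - x k) \<bullet> (Q *v (xh k - x k)))
       \<and> (xh (Suc k) - x (Suc k)) \<bullet> (Q *v (xh (Suc k) - x (Suc k))) \<le> (1 - \<rho>o) * ((xh k - x k) \<bullet> (Q *v (xh k - x k)))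
       \<and> mW * (norm (x k))^2 \<le> x k \<bullet> (W *v x k) \<and> mQ * (norm (xh k - x k))^2 \<le> (xh k - x k) \<bullet> (Q *v (xh k - x k))" for k
    proof (intro conjI)
      show "0 \<le> norm (x k)" "0 \<le> norm (xh k - x k)" by simp_all
      show "mW * (norm (x k))^2 \<le> x k \<bullet> (W *v x k)" by (rule mW(2))
      show eQ: "mQ * (norm (xh k - x k))^2 \<le> (xh k - x k) \<bullet> (Q *v (xh k - x k))" by (rule mQ(2))
      have "x (Suc k) \<bullet> (W *v x (Suc k)) \<le> (1 - \<rho>c/2) * (x k \<bullet> (W *v x k)) + C0 * (norm (xh k - x k))^2"
        using ctrl_full[OF Lc LMI_c(2) PP LMI_c(3) _ KY PW secu au0(1,2) psdW, of "x k" "xh k"] rec LMI_c(4)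
        by (simp add: C0_def MW_def mult.assoc)
      also have "C0 * (norm (xh k - x k))^2 \<le> K1 * ((xh k - x k) \<bullet> (Q *v (xh k - x k)))"
      proof -
        have "C0 * (norm (xh k - x k))^2 = K1 * (mQ * (norm (xh k - x k))^2)" using mQ(1) by (simp add: K1_def)
        also have "\<dots> \<le> K1 * ((xh k - x k) \<bullet> (Q *v (xh k - x k)))" using eQ K10 by (rule mult_left_mono)
        finally show ?thesis .
      qed
      finally show "x (Suc k) \<bullet> (W *v x (Suc k)) \<le> (1 - \<rho>c/2) * (x k \<bullet> (W *v x k)) + K1 * ((xh k - x k) \<bullet> (Q *v (xh k - x k)))"
        by simp
      define dd where "dd = D *v Su (K *v xh k)"
      have ek: "xh (Suc k) - x (Suc k) = A *v (xh k - x k) + L *v (Sy (C *v xh k + dd) - Sy (C *v x k + dd))"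
        using rec by (simp add: dd_def matrix_vector_mult_diff_distrib)
      have ab: "(C *v xh k + dd) - (C *v x k + dd) = C *v (xh k - x k)" by (simp add: matrix_vector_mult_diff_distrib)
      show "(xh (Suc k) - x (Suc k)) \<bullet> (Q *v (xh (Suc k) - x (Suc k))) \<le> (1 - \<rho>o) * ((xh k - x k) \<bullet> (Q *v (xh k - x k)))"
        unfolding ek by (rule obs_full[OF Lo LMI_o(2) UL au0(3) secy ab])
    qed
    have init: "x 0 \<bullet> (W *v x 0) \<le> MW * (norm (x 0))^2" "(xh 0 - x 0) \<bullet> (Q *v (xh 0 - x 0)) \<le> MQ * (norm (xh 0 - x 0))^2"
      unfolding MW_def MQ_def by (rule qf_upper)+
    fix k :: nat
    show "norm (x k) + norm (xh k - x k) \<le> cc * lam ^ k * (norm (x 0) + norm (xh 0 - x 0))"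
      using MAIN[where a="\<lambda>k. x k \<bullet> (W *v x k)" and q="\<lambda>k. (xh k - x k) \<bullet> (Q *v (xh k - x k))" and nx="\<lambda>k. norm (x k)" and ne="\<lambda>k. norm (xh k - x k)"]
        step init by blast
  qed
qed


end
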